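(* Let $\mathcal{A}=(\Sigma,Q,I,F,\delta)$ be an NFA and let $\mathcal{A}_{\mathrm{SS}}$ be the DFA output by the subset construction with $\mathcal{A}$ as input. Then $|\mathcal{A}_{\mathrm{SS}}|\le\|\mathcal{A}\|$, where $$\|\mathcal{A}\|=\min_{\mathcal{J}\subseteq\Sigma}\left(1+\sum_{w\in\Sigma\setminus\mathcal{J}}\left|\mathcal{R}(T^{(w)})\right|\right)\left|\mathcal{M}(\mathcal{J})\right|.$$
   Context: An NFA is $\mathcal{A}=(\Sigma,Q,I,F,\delta)$ with finite alphabet $\Sigma$, finite state set $Q=\{q_1,\dots,q_n\}$, initial states $I$, accepting states $F$, transitions $\delta\subseteq Q\times\Sigma\times Q$ ($\varepsilon$-free). The Boolean semifield is $\mathbb{B}=(\{0,1\},\vee,\wedge,0,1)$. For $w\in\Sigma$ the transition matrix $T^{(w)}\in\mathbb{B}^{n\times n}$ has $T^{(w)}_{i,j}=1$ iff $(q_i,w,q_j)\in\delta$. The range $\mathcal{R}(T)$ of a Boolean matrix $T$ is $\{Tv:v\in\mathbb{B}^n\}$. For $\mathcal{J}\subseteq\Sigma$, $\mathcal{M}(\mathcal{J})$ is the monoid of $n\times n$ Boolean matrices generated by $\{T^{(w)}:w\in\mathcal{J}\}$ under Boolean matrix multiplication, containing the identity matrix. The subset construction produces the DFA $\mathcal{A}_{\mathrm{SS}}$ whose states are exactly the subsets $\mathcal{Q}\subseteq Q$ reachable from $\mathcal{Q}_I=I$ by repeatedly applying, for $w\in\Sigma$, the map $\mathcal{Q}\mapsto\{q':(q,w,q')\in\delta,\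 q\in\mathcal{Q}\}$ (including the empty set if reachable); $|\mathcal{A}_{\mathrm{SS}}|$ is its number of states. *)

theory Defs
  imports Main
begin

text \<open>NFA over a finite alphabet (the finite type 'a, i.e. Sigma = UNIV) with
  finite state set (the finite type 'q, i.e. Q = UNIV).\<close>

type_synonym 'q bmat = "'q \<Rightarrow> 'q \<Rightarrow> bool"
type_synonym 'q bvec = "'q \<Rightarrow> bool"

definition bmat_mult :: "'q bmat \<Rightarrow> 'q bmat \<Rightarrow> 'q bmat" where
  "bmat_mult A B = (\<lambda>i j. \<exists>k. A i k \<and> B k j)"

definition bmat_id :: "'q bmat" where
  "bmat_id = (\<lambda>i j. i = j)"

definition bmat_vec :: "'q bmat \<Rightarrow> 'q bvec \<Rightarrow> 'q bvec" where
  "bmat_vec T v = (\<lambda>i. \<exists>j. T i j \<and> v j)"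

definition trans_mat :: "('q \<times> 'a \<times> 'q) set \<Rightarrow> 'a \<Rightarrow> 'q bmat" where
  "trans_mat \<delta> w = (\<lambda>i j. (i, w, j) \<in> \<delta>)"

definition bmat_range :: "'q bmat \<Rightarrow> 'q bvec set" where
  "bmat_range T = {bmat_vec T v | v. True}"

inductive_set gen_monoid :: "('q \<times> 'a \<times> 'q) set \<Rightarrow> 'a set \<Rightarrow> 'q bmat set"
  for \<delta> :: "('q \<times> 'a \<times> 'q) set" and J :: "'a set" where
  gm_id: "bmat_id \<in> gen_monoid \<delta> J"
| gm_gen: "w \<in> J \<Longrightarrow> trans_mat \<delta> w \<in> gen_monoid \<delta> J"
| gm_mult: "A \<in> gen_monoid \<delta> J \<Longrightarrow> B \<in> gen_monoid \<delta> J \<Longrightarrow> bmat_mult A B \<in> gen_monoid \<delta> J"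

definition ss_step :: "('q \<times> 'a \<times> 'q) set \<Rightarrow> 'q set \<Rightarrow> 'a \<Rightarrow> 'q set" where
  "ss_step \<delta> S w = {q'. \<exists>q\<in>S. (q, w, q') \<in> \<delta>}"

inductive_set ss_states :: "('q \<times> 'a \<times> 'q) set \<Rightarrow> 'q set \<Rightarrow> 'q set set"
  for \<delta> :: "('q \<times> 'a \<times> 'q) set" and I :: "'q set" where
  ss_init: "I \<in> ss_states \<delta> I"
| ss_next: "S \<in> ss_states \<delta> I \<Longrightarrow> ss_step \<delta> S w \<in> ss_states \<delta> I"

definition nfa_norm :: "('q::finite \<times> 'a::finite \<times> 'q) set \<Rightarrow> nat" where
  "nfa_norm \<delta> = Min ((\<lambda>J. (1 + (\<Sum>w\<in>UNIV - J. card (bmat_range (trans_mat \<delta> w))))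
                          * card (gen_monoid \<delta> J)) ` Pow (UNIV :: 'a set))"

end

theory Submission
  imports Defs
begin

definition app :: "'q set \<Rightarrow> 'q bmat \<Rightarrow> 'q set" where
  "app S M = {q'. \<exists>q\<in>S. M q q'}"

lemma app_id: "app S bmat_id = S"
  by (auto simp: app_def bmat_id_def)

lemma app_mult: "app (app S A) B = app S (bmat_mult A B)"
  by (auto simp: app_def bmat_mult_def)

lemma step_app: "ss_step \<delta> S w = app S (trans_mat \<delta> w)"
  by (auto simp: app_def ss_step_def trans_mat_def)

definition RS :: "'q bmat \<Rightarrow> 'q set set" where
  "RS T = {app u T | u. True}"

lemma RS_inj:
  "inj_on (\<lambda>r. bmat_vec T (\<lambda>j. j \<notin> r)) (RS T)"
proof (rule inj_onI)
  have key: "r = {q'. \<exists>i. \<not> bmat_vec T (\<lambda>j. j \<notin> r) i \<and> T i q'}" if "r \<in> RS T" for r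
    using that by (auto simp: RS_def app_def bmat_vec_def)
  fix x y assume "x \<in> RS T" "y \<in> RS T"
    "bmat_vec T (\<lambda>j. j \<notin> x) = bmat_vec T (\<lambda>j. j \<notin> y)"
  then show "x = y" using key[of x] key[of y] by metis
qed

lemma RS_card:
  fixes T :: "('q::finite) bmat"
  shows "card (RS T) \<le> card (bmat_range T)"
proof -
  have "(\<lambda>r. bmat_vec T (\<lambda>j. j \<notin> r)) ` RS T \<subseteq> bmat_range T"
    by (auto simp: bmat_range_def)
  then show ?thesis using RS_inj[of T]
    by (metis card_image card_mono finite)
qed

lemma ss_cover:
  assumes "S \<in> ss_states \<delta> I"
  shows "S \<in> (\<lambda>M. app I M) ` gen_monoid \<delta> J \<union>
     (\<Union>w\<in>UNIV - J. (\<lambda>(r, M). app r M) ` (RS (trans_mat \<delta> w) \<times> gen_monoid \<delta> J))"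
  using assms
proof (induction rule: ss_states.induct)
  case ss_init
  then show ?case using gen_monoid.gm_id app_id by (metis UnI1 image_eqI)
next
  case (ss_next S w)
  show ?case
  proof (cases "w \<in> J")
    case True
    from ss_next.IH show ?thesis
    proof
      assume "S \<in> (\<lambda>M. app I M) ` gen_monoid \<delta> J"
      then obtain M where M: "M \<in> gen_monoid \<delta> J" "S = app I M" by auto
      have "bmat_mult M (trans_mat \<delta> w) \<in> gen_monoid \<delta> J"
        using M True by (auto intro: gen_monoid.intros)
      then show ?thesis using M by (auto simp: step_app app_mult)
    next
      assume "S \<in> (\<Union>w\<in>UNIV - J. (\<lambda>(r, M). app r M) ` (RS (trans_mat \<delta> w) \<times> gen_monoid \<delta> J))"
      then obtain v r M where M: "v \<in> UNIV - J" "r \<in> RS (trans_mat \<delta> v)"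
        "M \<in> gen_monoid \<delta> J" "S = app r M" by auto
      have "bmat_mult M (trans_mat \<delta> w) \<in> gen_monoid \<delta> J"
        using M True by (auto intro: gen_monoid.intros)
      then have "ss_step \<delta> S w \<in> (\<lambda>(r, M). app r M) ` (RS (trans_mat \<delta> v) \<times> gen_monoid \<delta> J)"
        using M by (auto simp: step_app app_mult)
      then show ?thesis using M(1) by (intro UnI2 UN_I[of v]) auto
    qed
  next
    case False
    have "ss_step \<delta> S w \<in> RS (trans_mat \<delta> w)"
      by (auto simp: step_app RS_def)
    then have "ss_step \<delta> S w \<in> (\<lambda>(r, M). app r M) ` (RS (trans_mat \<delta> w) \<times> gen_monoid \<delta> J)"
      using app_id gen_monoid.gm_id
      by (metis (no_types, lifting) SigmaI case_prod_conv image_eqI)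
    then show ?thesis using False by (intro UnI2 UN_I[of w]) auto
  qed
qed

lemma bound_J:
  fixes \<delta> :: "('q::finite \<times> 'a::finite \<times> 'q) set"
  shows "card (ss_states \<delta> I) \<le> (1 + (\<Sum>w\<in>UNIV - J. card (bmat_range (trans_mat \<delta> w))))
                          * card (gen_monoid \<delta> J)"
proof -
  let ?G = "gen_monoid \<delta> J"
  let ?A = "(\<lambda>M. app I M) ` ?G"
  let ?B = "\<lambda>w. (\<lambda>(r, M). app r M) ` (RS (trans_mat \<delta> w) \<times> ?G)"
  have "card (ss_states \<delta> I) \<le> card (?A \<union> (\<Union>w\<in>UNIV - J. ?B w))"
    using ss_cover by (intro card_mono) (auto, blast)
  also have "\<dots> \<le> card ?A + card (\<Union>w\<in>UNIV - J. ?B w)" by (rule card_Un_le)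
  also have "card (\<Union>w\<in>UNIV - J. ?B w) \<le> (\<Sum>w\<in>UNIV - J. card (?B w))"
    by (rule card_UN_le) simp
  also have "(\<Sum>w\<in>UNIV - J. card (?B w)) \<le> (\<Sum>w\<in>UNIV - J. card (bmat_range (trans_mat \<delta> w)) * card ?G)"
  proof (rule sum_mono)
    fix w
    have "card (?B w) \<le> card (RS (trans_mat \<delta> w) \<times> ?G)" by (rule card_image_le) simp
    also have "\<dots> = card (RS (trans_mat \<delta> w)) * card ?G" by (rule card_cartesian_product)
    also have "\<dots> \<le> card (bmat_range (trans_mat \<delta> w)) * card ?G"
      using RS_card by (rule mult_right_mono) simp
    finally show "card (?B w) \<le> card (bmat_range (trans_mat \<delta> w)) * card ?G" .
  qed
  also have "card ?A \<le> card ?G" by (rule card_image_le) simp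
  finally show ?thesis by (simp add: sum_distrib_right)
qed

theorem theorem3:
  fixes \<delta> :: "('q::finite \<times> 'a::finite \<times> 'q) set" and I F :: "'q set"
  shows "card (ss_states \<delta> I) \<le> nfa_norm \<delta>"
  unfolding nfa_norm_def
  by (subst Min_ge_iff) (auto, metis bound_J add.commute distrib_right mult_1)

end
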